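(* Let $0<\delta<1$, $t>1$, $\lambda_c:=1/(t^{1-\delta}-1)$, $\lambda_c\le\lambda\le t^{1-\delta}-1$, $0<k<t^{\delta-1}$, and let $\phi$ satisfy $0<\phi<\pi/2$ if $\ln\lambda\ge0$ and $0<\phi<\arctan(\pi/|\ln\lambda|)$ if $\ln\lambda<0$. When $z$ lies on the contour $\{z=1-k+R{\rm e}^{{\rm i}\phi}:0\le R<\infty\}$, the function $F(z;\lambda)$ has non-negative imaginary part.
   Context: $F(z;\lambda):=(1-z)\ln(1-z)+z\ln z+z\ln\lambda$, with branch cuts $(-\infty,0]$ and $[1,\infty)$. *)

theory Defs
  imports "HOL-Analysis.Analysis"
begin

definition F :: "complex \<Rightarrow> real \<Rightarrow> complex" where
  "F z lam = (1 - z) * Ln (1 - z) + z * Ln z + z * complex_of_real (ln lam)"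

end

theory Submission imports Defs "HOL-Real_Asymp.Real_Asymp" begin

lemma dF:
  fixes lam :: real and w :: complex
  assumes "w \<notin> \<real>\<^sub>\<le>\<^sub>0" "1 - w \<notin> \<real>\<^sub>\<le>\<^sub>0"
  shows "((\<lambda>z. F z lam) has_field_derivative (Ln w - Ln (1 - w) + of_real (ln lam))) (at w)"
proof -
  have nz: "w \<noteq> 0" "1 - w \<noteq> 0" using assms by auto
  show ?thesis unfolding F_def
    apply (rule derivative_eq_intros refl assms)+
    using nz by (simp add: field_simps)
qed

lemma dH:
  fixes k lam :: real and u w r :: complex
  assumes "w \<notin> \<real>\<^sub>\<le>\<^sub>0" "1 - w \<notin> \<real>\<^sub>\<le>\<^sub>0" "w = 1 - of_real k + r * u"
  shows "((\<lambda>r. F (1 - of_real k + r * u) lam) has_field_derivative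
          u * (Ln w - Ln (1 - w) + of_real (ln lam))) (at r)"
proof -
  have "((\<lambda>r. 1 - of_real k + r * u) has_field_derivative u) (at r)"
    by (rule derivative_eq_intros refl)+ simp
  moreover have "((\<lambda>z. F z lam) has_field_derivative (Ln w - Ln (1 - w) + of_real (ln lam))) (at (1 - of_real k + r * u))"
    using dF[OF assms(1,2)] assms(3) by simp
  ultimately have "((\<lambda>r. F (1 - of_real k + r * u) lam) has_field_derivative (Ln w - Ln (1 - w) + of_real (ln lam)) * u) (at r)"
    by (rule DERIV_chain2[rotated])
  then show ?thesis using assms(3) by (simp add: mult.commute)
qed

lemma dh:
  fixes k lam :: real and u w r :: complex
  assumes "w \<notin> \<real>\<^sub>\<le>\<^sub>0" "1 - w \<notin> \<real>\<^sub>\<le>\<^sub>0" "w = 1 - of_real k + r * u"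
  shows "((\<lambda>r. u * (Ln (1 - of_real k + r * u) - Ln (1 - (1 - of_real k + r * u)) + of_real (ln lam)))
          has_field_derivative u * (u / w + u / (1 - w))) (at r)"
proof -
  note a = assms(1,2)[unfolded assms(3)]
  have nz: "w \<noteq> 0" "1 - w \<noteq> 0" using assms by auto
  have nz2: "1 - of_real k + r * u \<noteq> 0" "of_real k - r * u \<noteq> 0" using nz assms(3) by (auto simp: algebra_simps)
  show ?thesis
    apply (rule derivative_eq_intros refl a)+
    using nz2 by (simp add: assms(3) field_simps)
qed

lemma core:
  fixes k lam \<phi> R :: real
  assumes k: "0 < k" "2 * k \<le> 1"
    and ph: "0 < \<phi>" "\<phi> < pi / 2"
    and lam: "0 < lam" "k \<le> lam * (1 - k)"
    and ginf: "0 \<le> sin \<phi> * ln lam + pi * cos \<phi>"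
    and R: "0 \<le> R"
  shows "0 \<le> Im (F (1 - of_real k + of_real R * exp (\<i> * of_real \<phi>)) lam)"
proof -
  define u where "u = exp (\<i> * complex_of_real \<phi>)"
  have Reu: "Re u = cos \<phi>" and Imu: "Im u = sin \<phi>" by (simp_all add: u_def Re_exp Im_exp)
  have sp: "0 < sin \<phi>" using ph by (intro sin_gt_zero) auto
  have cp: "0 < cos \<phi>" using ph by (intro cos_gt_zero_pi) auto
  define z where "z R = 1 - of_real k + of_real R * u" for R
  have Rez: "Re (z x) = 1 - k + x * cos \<phi>" "Im (z x) = x * sin \<phi>"
    "Re (1 - z x) = k - x * cos \<phi>" "Im (1 - z x) = - (x * sin \<phi>)" for x
    by (simp_all add: z_def Reu Imu)
  have cut: "z x \<notin> \<real>\<^sub>\<le>\<^sub>0" "1 - z x \<notin> \<real>\<^sub>\<le>\<^sub>0" if "0 \<le> x" for x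
  proof -
    have "z x \<notin> \<real>\<^sub>\<le>\<^sub>0 \<and> 1 - z x \<notin> \<real>\<^sub>\<le>\<^sub>0"
    proof (cases "x = 0")
      case True then show ?thesis using k by (simp add: complex_nonpos_Reals_iff Rez)
    next
      case False then have "x > 0" using that by simp
      then show ?thesis using sp by (simp add: complex_nonpos_Reals_iff Rez)
    qed
    then show "z x \<notin> \<real>\<^sub>\<le>\<^sub>0" "1 - z x \<notin> \<real>\<^sub>\<le>\<^sub>0" by auto
  qed
  define g where "g x = Im (u * (Ln (z x) - Ln (1 - z x) + of_real (ln lam)))" for x
  define g' where "g' x = Im (u * (u / z x + u / (1 - z x)))" for x
  define P where "P x = Im (F (z x) lam)" for x
  have Peq: "P = (\<lambda>y. Im (F (1 - of_real k + of_real y * u) lam))" by (simp add: P_def z_def fun_eq_iff)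
  have geq: "g = (\<lambda>y. Im (u * (Ln (1 - of_real k + of_real y * u) - Ln (1 - (1 - of_real k + of_real y * u)) + of_real (ln lam))))"
    by (simp add: g_def z_def fun_eq_iff)
  have dP: "(P has_real_derivative g x) (at x)" if "0 \<le> x" for x
  proof -
    have "((\<lambda>r. F (1 - of_real k + r * u) lam) has_field_derivative
          u * (Ln (z x) - Ln (1 - z x) + of_real (ln lam))) (at (of_real x))"
      by (rule dH[OF cut[OF that]]) (simp add: z_def)
    then have "((\<lambda>y. F (1 - of_real k + of_real y * u) lam) has_vector_derivative
          u * (Ln (z x) - Ln (1 - z x) + of_real (ln lam))) (at x)"
      by (rule has_vector_derivative_real_field)
    then have "((\<lambda>y. Im (F (1 - of_real k + of_real y * u) lam)) has_field_derivative
          Im (u * (Ln (z x) - Ln (1 - z x) + of_real (ln lam)))) (at x)"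
      by (rule has_field_derivative_Im)
    then show ?thesis unfolding Peq g_def z_def .
  qed
  have dg: "(g has_real_derivative g' x) (at x)" if "0 \<le> x" for x
  proof -
    have "((\<lambda>r. u * (Ln (1 - of_real k + r * u) - Ln (1 - (1 - of_real k + r * u)) + of_real (ln lam)))
          has_field_derivative u * (u / z x + u / (1 - z x))) (at (of_real x))"
      by (rule dh[OF cut[OF that]]) (simp add: z_def)
    then have "((\<lambda>y. u * (Ln (1 - of_real k + of_real y * u) - Ln (1 - (1 - of_real k + of_real y * u)) + of_real (ln lam)))
          has_vector_derivative u * (u / z x + u / (1 - z x))) (at x)"
      by (rule has_vector_derivative_real_field)
    then have "((\<lambda>y. Im (u * (Ln (1 - of_real k + of_real y * u) - Ln (1 - (1 - of_real k + of_real y * u)) + of_real (ln lam))))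
          has_field_derivative Im (u * (u / z x + u / (1 - z x)))) (at x)"
      by (rule has_field_derivative_Im)
    then show ?thesis unfolding geq g'_def z_def .
  qed
  have den: "0 < (Re (z x * (1 - z x)))\<^sup>2 + (Im (z x * (1 - z x)))\<^sup>2" if "0 \<le> x" for x
  proof -
    have "z x * (1 - z x) \<noteq> 0" using cut[OF that] by auto
    then show ?thesis by (simp add: sum_power2_gt_zero_iff complex_eq_iff)
  qed
  have g'sign: "g' x * ((Re (z x * (1 - z x)))\<^sup>2 + (Im (z x * (1 - z x)))\<^sup>2)
      = sin \<phi> * (2 * (1 - k) * k * cos \<phi> - (1 - 2 * k) * x)" if "0 \<le> x" for x
  proof -
    have zz: "z x \<noteq> 0" "1 - z x \<noteq> 0" using cut[OF that] by auto
    have e1: "u * (u / z x + u / (1 - z x)) = (u * u) / (z x * (1 - z x))"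
      using zz by (simp add: field_simps)
    have D: "(Re (z x * (1 - z x)))\<^sup>2 + (Im (z x * (1 - z x)))\<^sup>2 \<noteq> 0"
      using den[OF that] by linarith
    have "g' x * ((Re (z x * (1 - z x)))\<^sup>2 + (Im (z x * (1 - z x)))\<^sup>2)
       = Im (u * u) * Re (z x * (1 - z x)) - Re (u * u) * Im (z x * (1 - z x))"
      using D by (simp add: g'_def e1 Im_divide)
    also have "\<dots> = sin \<phi> * (2 * (1 - k) * k * cos \<phi> - (1 - 2 * k) * x)"
      apply (simp add: Rez Reu Imu)
      using sin_cos_squared_add[of \<phi>] by algebra
    finally show ?thesis .
  qed
  have g'pos: "0 \<le> g' x" if "0 \<le> x" "(1 - 2 * k) * x \<le> 2 * (1 - k) * k * cos \<phi>" for x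
  proof -
    have "0 \<le> g' x * ((Re (z x * (1 - z x)))\<^sup>2 + (Im (z x * (1 - z x)))\<^sup>2)"
      using g'sign[OF that(1)] that(2) sp by simp
    then show ?thesis using den[OF that(1)] by (simp add: zero_le_mult_iff)
  qed
  have g'neg: "g' x \<le> 0" if "0 \<le> x" "(1 - 2 * k) * x \<ge> 2 * (1 - k) * k * cos \<phi>" for x
  proof -
    have "g' x * ((Re (z x * (1 - z x)))\<^sup>2 + (Im (z x * (1 - z x)))\<^sup>2) \<le> 0"
      using g'sign[OF that(1)] that(2) sp by (simp add: mult_nonneg_nonpos)
    then show ?thesis using den[OF that(1)] by (simp add: mult_le_0_iff)
  qed
  have Ln1: "Ln (z 0) = of_real (ln (1 - k))" using Ln_of_real[of "1 - k"] k by (simp add: z_def)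
  have Ln2: "Ln (1 - z 0) = of_real (ln k)" using Ln_of_real[of "k"] k by (simp add: z_def)
  have g0: "0 \<le> g 0"
  proof -
    have "ln k \<le> ln (lam * (1 - k))" using lam k by (subst ln_le_cancel_iff) auto
    also have "\<dots> = ln lam + ln (1 - k)" using lam k by (simp add: ln_mult)
    finally have "0 \<le> ln (1 - k) - ln k + ln lam" by simp
    then show ?thesis using sp by (simp add: g_def Ln1 Ln2 Imu)
  qed
  have glim: "(g \<longlongrightarrow> sin \<phi> * ln lam + pi * cos \<phi>) at_top"
  proof -
    have Lnu: "Ln u = \<i> * of_real \<phi>" unfolding u_def using ph by (subst Ln_exp) auto
    have "exp (\<i> * of_real (\<phi> - pi)) = exp (\<i> * of_real \<phi> - \<i> * of_real pi)"
      by (simp add: algebra_simps)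
    also have "\<dots> = - u" by (simp add: exp_diff u_def)
    finally have mu: "- u = exp (\<i> * of_real (\<phi> - pi))" by simp
    have Lnmu: "Ln (- u) = \<i> * of_real (\<phi> - pi)" unfolding mu using ph by (subst Ln_exp) auto
    have cu: "u \<notin> \<real>\<^sub>\<le>\<^sub>0" "- u \<notin> \<real>\<^sub>\<le>\<^sub>0" using sp by (auto simp: complex_nonpos_Reals_iff Imu)
    define A where "A S = of_real ((1 - k) / S) + u" for S :: real
    define B where "B S = of_real (k / S) - u" for S :: real
    have l1: "((\<lambda>S::real. (1 - k) / S) \<longlongrightarrow> 0) at_top" by real_asymp
    have l2: "((\<lambda>S::real. k / S) \<longlongrightarrow> 0) at_top" by real_asymp
    have tA: "(A \<longlongrightarrow> u) at_top"
      using tendsto_add[OF tendsto_of_real[OF l1] tendsto_const[of u]] by (simp add: A_def[abs_def])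
    have tB: "(B \<longlongrightarrow> - u) at_top"
      using tendsto_diff[OF tendsto_of_real[OF l2] tendsto_const[of u]] by (simp add: B_def[abs_def])
    have tLA: "((\<lambda>S. Ln (A S)) \<longlongrightarrow> Ln u) at_top"
      by (rule isCont_tendsto_compose[OF continuous_at_Ln[OF cu(1)] tA])
    have tLB: "((\<lambda>S. Ln (B S)) \<longlongrightarrow> Ln (- u)) at_top"
      by (rule isCont_tendsto_compose[OF continuous_at_Ln[OF cu(2)] tB])
    have t: "((\<lambda>S. Im (u * (Ln (A S) - Ln (B S) + of_real (ln lam)))) \<longlongrightarrow>
          Im (u * (Ln u - Ln (- u) + of_real (ln lam)))) at_top"
      by (intro tendsto_intros tLA tLB)
    have val: "Im (u * (Ln u - Ln (- u) + of_real (ln lam))) = sin \<phi> * ln lam + pi * cos \<phi>"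
      by (simp add: Lnu Lnmu Reu Imu algebra_simps)
    have ev: "eventually (\<lambda>S. Im (u * (Ln (A S) - Ln (B S) + of_real (ln lam))) = g S) at_top"
      using eventually_gt_at_top[of 0]
    proof (rule eventually_mono)
      fix S :: real assume S: "0 < S"
      have zz: "z S \<noteq> 0" "1 - z S \<noteq> 0" using cut[of S] S by auto
      have "A S = z S / of_real S" using S by (simp add: A_def z_def field_simps)
      then have a: "Ln (A S) = Ln (z S) - ln S" using Ln_divide_of_real[OF S zz(1)] by simp
      have "B S = (1 - z S) / of_real S" using S by (simp add: B_def z_def field_simps)
      then have b: "Ln (B S) = Ln (1 - z S) - ln S" using Ln_divide_of_real[OF S zz(2)] by simp
      show "Im (u * (Ln (A S) - Ln (B S) + of_real (ln lam))) = g S"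
        by (simp add: a b g_def)
    qed
    show ?thesis using Lim_transform_eventually[OF t ev] val by simp
  qed
  have contg: "continuous_on {a..b} g" if "0 \<le> a" for a b
  proof (intro continuous_at_imp_continuous_on ballI)
    fix y assume "y \<in> {a..b}" then have "0 \<le> y" using that by auto
    then show "isCont g y" by (rule DERIV_isCont[OF dg])
  qed
  have contP: "continuous_on {a..b} P" if "0 \<le> a" for a b
  proof (intro continuous_at_imp_continuous_on ballI)
    fix y assume "y \<in> {a..b}" then have "0 \<le> y" using that by auto
    then show "isCont P y" by (rule DERIV_isCont[OF dP])
  qed
  have gR: "0 \<le> g x" if "0 \<le> x" for x
  proof (cases "(1 - 2 * k) * x \<le> 2 * (1 - k) * k * cos \<phi>")
    case True
    have "g 0 \<le> g x"
    proof (rule DERIV_nonneg_imp_increasing_open[OF that])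
      fix y assume y: "0 < y" "y < x"
      have "(1 - 2 * k) * y \<le> (1 - 2 * k) * x" using k y by (intro mult_left_mono) auto
      then show "\<exists>d. (g has_real_derivative d) (at y) \<and> 0 \<le> d"
        using dg[of y] g'pos[of y] y True by auto
    qed (rule contg, simp)
    then show ?thesis using g0 by simp
  next
    case False
    have "g S \<le> g x" if S: "x \<le> S" for S
    proof (rule DERIV_nonpos_imp_decreasing_open[OF S])
      fix y assume y: "x < y" "y < S"
      have "(1 - 2 * k) * x \<le> (1 - 2 * k) * y" using k y by (intro mult_left_mono) auto
      then show "\<exists>d. (g has_real_derivative d) (at y) \<and> d \<le> 0"
        using dg[of y] g'neg[of y] y False \<open>0 \<le> x\<close> by auto
    qed (rule contg, rule \<open>0 \<le> x\<close>)
    then have "eventually (\<lambda>S. g S \<le> g x) at_top"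
      using eventually_ge_at_top[of x] by (metis (mono_tags, lifting) eventually_mono)
    then have "sin \<phi> * ln lam + pi * cos \<phi> \<le> g x"
      by (intro tendsto_upperbound[OF glim]) auto
    then show ?thesis using ginf by simp
  qed
  have P0: "P 0 = 0"
    by (simp add: P_def F_def Ln1 Ln2 Rez)
  have "P 0 \<le> P R"
  proof (rule DERIV_nonneg_imp_increasing_open[OF R])
    fix y assume y: "0 < y" "y < R"
    then show "\<exists>d. (P has_real_derivative d) (at y) \<and> 0 \<le> d"
      using dP[of y] gR[of y] by auto
  qed (rule contP, simp)
  then show ?thesis using P0 by (simp add: P_def z_def u_def)
qed

theorem lemma4p5:
  fixes \<delta> t lam k \<phi> R :: real
  assumes "0 < \<delta>" "\<delta> < 1" "1 < t"
    and "1 / (t powr (1 - \<delta>) - 1) \<le> lam" "lam \<le> t powr (1 - \<delta>) - 1"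
    and "0 < k" "k < t powr (\<delta> - 1)"
    and "ln lam \<ge> 0 \<Longrightarrow> 0 < \<phi> \<and> \<phi> < pi / 2"
    and "ln lam < 0 \<Longrightarrow> 0 < \<phi> \<and> \<phi> < arctan (pi / \<bar>ln lam\<bar>)"
    and "0 \<le> R"
  shows "Im (F (1 - complex_of_real k + complex_of_real R * exp (\<i> * complex_of_real \<phi>)) lam) \<ge> 0"
proof -
  define T where "T = t powr (1 - \<delta>)"
  have T1: "1 < T" unfolding T_def using assms(2,3) by simp
  have kT: "k < 1 / T"
    using assms(7) unfolding T_def by (simp add: powr_minus[symmetric] divide_inverse)
  have lamT: "1 / (T - 1) \<le> lam" "lam \<le> T - 1" using assms(4,5) unfolding T_def by auto
  have "1 / (T - 1) \<le> T - 1" using lamT by linarith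
  then have "1 \<le> (T - 1) * (T - 1)" using T1 by (simp add: field_simps)
  then have T2: "2 \<le> T"
  proof -
    assume h: "1 \<le> (T - 1) * (T - 1)"
    show ?thesis
    proof (rule ccontr)
      assume "\<not> 2 \<le> T"
      then have "(T - 1) * (T - 1) < 1 * 1" using T1 by (intro mult_strict_mono) auto
      then show False using h by simp
    qed
  qed
  have kT': "k * T < 1" using kT T1 by (simp add: field_simps)
  have "k * 2 \<le> k * T" using T2 assms(6) by (intro mult_left_mono) auto
  then have k2: "2 * k \<le> 1" using kT' by linarith
  have lampos: "0 < lam" using lamT(1) T1 by (smt (verit) divide_pos_pos)
  have "k < (1 - k) / (T - 1)" using kT' T1 by (simp add: field_simps)
  also have "\<dots> \<le> lam * (1 - k)"
    using lamT(1) k2 T1 mult_right_mono[OF lamT(1), of "1 - k"] by simp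
  finally have lk: "k \<le> lam * (1 - k)" by simp
  have ph: "0 < \<phi> \<and> \<phi> < pi / 2"
  proof (cases "ln lam \<ge> 0")
    case True then show ?thesis using assms(8) by auto
  next
    case False
    then have "0 < \<phi> \<and> \<phi> < arctan (pi / \<bar>ln lam\<bar>)" using assms(9) by auto
    moreover have "arctan (pi / \<bar>ln lam\<bar>) < pi / 2" by (rule arctan_ubound)
    ultimately show ?thesis by linarith
  qed
  have sp: "0 < sin \<phi>" using ph by (intro sin_gt_zero) auto
  have cp: "0 < cos \<phi>" using ph by (intro cos_gt_zero_pi) auto
  have ginf: "0 \<le> sin \<phi> * ln lam + pi * cos \<phi>"
  proof (cases "ln lam \<ge> 0")
    case True then show ?thesis using sp cp by (simp add: add_nonneg_nonneg)
  next
    case False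
    then have L: "ln lam < 0" by simp
    then have "\<phi> < arctan (pi / \<bar>ln lam\<bar>)" using assms(9) by auto
    then have "arctan (tan \<phi>) < arctan (pi / \<bar>ln lam\<bar>)" using ph by (simp add: arctan_tan)
    then have "tan \<phi> < pi / (- ln lam)" using L by (simp add: arctan_less_iff)
    then have "sin \<phi> / cos \<phi> * (- ln lam) < pi" using L by (simp add: tan_def field_simps)
    then have "sin \<phi> * (- ln lam) < pi * cos \<phi>" using cp by (simp add: field_simps)
    then show ?thesis by simp
  qed
  show ?thesis using core[OF assms(6) k2 _ _ lampos lk ginf assms(10)] ph by auto
qed

end
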